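(* Let $G$ be a graph and $k$ a positive integer, and let $X$ be the set of vertices of $G$ that do not lie in any subgraph of $G$ with minimum degree at least $k$. If $|X| \geq k$, then $\sum_{v \in X} \deg_G(v) \leq 2(k-1)|X| - \binom{k}{2}$.
   Context: All graphs are finite, simple and undirected; $\deg_G(v)$ denotes the degree of $v$ in $G$. *)

theory Defs
  imports Main
begin

definition simple_graph :: "'a set \<Rightarrow> ('a \<Rightarrow> 'a \<Rightarrow> bool) \<Rightarrow> bool" where
  "simple_graph V E \<longleftrightarrow> finite V \<and> (\<forall>u v. E u v \<longrightarrow> u \<in> V \<and> v \<in> V)
     \<and> (\<forall>u v. E u v \<longrightarrow> E v u) \<and> (\<forall>v. \<not> E v v)"

definition degree :: "'a set \<Rightarrow> ('a \<Rightarrow> 'a \<Rightarrow> bool) \<Rightarrow> 'a \<Rightarrow> nat" where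
  "degree V E v = card {u \<in> V. E v u}"

definition subgraph :: "'a set \<Rightarrow> ('a \<Rightarrow> 'a \<Rightarrow> bool) \<Rightarrow> 'a set \<Rightarrow> ('a \<Rightarrow> 'a \<Rightarrow> bool) \<Rightarrow> bool" where
  "subgraph W F V E \<longleftrightarrow> W \<subseteq> V \<and> simple_graph W F \<and> (\<forall>u v. F u v \<longrightarrow> E u v)"

definition min_degree_at_least :: "'a set \<Rightarrow> ('a \<Rightarrow> 'a \<Rightarrow> bool) \<Rightarrow> nat \<Rightarrow> bool" where
  "min_degree_at_least W F k \<longleftrightarrow> (\<forall>w\<in>W. degree W F w \<ge> k)"

definition outside_k_subgraphs :: "'a set \<Rightarrow> ('a \<Rightarrow> 'a \<Rightarrow> bool) \<Rightarrow> nat \<Rightarrow> 'a set" where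
  "outside_k_subgraphs V E k =
     {v \<in> V. \<not> (\<exists>W F. subgraph W F V E \<and> min_degree_at_least W F k \<and> v \<in> W)}"

end

theory Submission
  imports Defs
begin

lemma deg_sub_le:
  assumes "simple_graph V E" "subgraph W F V E" "u \<in> W"
  shows "degree W F u \<le> degree V E u"
proof -
  have "{w \<in> W. F u w} \<subseteq> {w \<in> V. E u w}" using assms unfolding subgraph_def by auto
  moreover have "finite V" using assms(1) unfolding simple_graph_def by auto
  ultimately show ?thesis unfolding degree_def by (simp add: card_mono)
qed

lemma low_in_X:
  assumes "simple_graph V E" "u \<in> V" "degree V E u < k"
  shows "u \<in> outside_k_subgraphs V E k"
proof -
  have "\<not> (subgraph W F V E \<and> min_degree_at_least W F k \<and> u \<in> W)" for W F
  proof
    assume h: "subgraph W F V E \<and> min_degree_at_least W F k \<and> u \<in> W"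
    then have "k \<le> degree W F u" unfolding min_degree_at_least_def by blast
    moreover have "degree W F u \<le> degree V E u" using deg_sub_le[OF assms(1)] h by blast
    ultimately show False using assms(3) by linarith
  qed
  then show ?thesis using assms(2) unfolding outside_k_subgraphs_def by blast
qed

lemma exists_low:
  assumes "simple_graph V E" "outside_k_subgraphs V E k \<noteq> {}"
  shows "\<exists>v\<in>V. degree V E v < k"
proof (rule ccontr)
  assume "\<not> ?thesis"
  then have "min_degree_at_least V E k" unfolding min_degree_at_least_def by auto
  moreover have "subgraph V E V E" using assms(1) unfolding subgraph_def by auto
  ultimately show False using assms(2) unfolding outside_k_subgraphs_def by auto
qed

lemma del_graph:
  assumes "simple_graph V E"
  shows "simple_graph (V - {v}) (\<lambda>a b. E a b \<and> a \<noteq> v \<and> b \<noteq> v)"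
  using assms unfolding simple_graph_def by auto

lemma del_X:
  assumes "simple_graph V E" "v \<in> V" "degree V E v < k"
  shows "outside_k_subgraphs (V - {v}) (\<lambda>a b. E a b \<and> a \<noteq> v \<and> b \<noteq> v) k
         = outside_k_subgraphs V E k - {v}"
proof
  let ?E = "\<lambda>a b. E a b \<and> a \<noteq> v \<and> b \<noteq> v"
  show "outside_k_subgraphs (V - {v}) ?E k \<subseteq> outside_k_subgraphs V E k - {v}"
  proof
    fix u assume u: "u \<in> outside_k_subgraphs (V - {v}) ?E k"
    have "u \<in> V" "u \<noteq> v" using u unfolding outside_k_subgraphs_def by auto
    moreover have "\<not> (subgraph W F V E \<and> min_degree_at_least W F k \<and> u \<in> W)" for W F
    proof
      assume h: "subgraph W F V E \<and> min_degree_at_least W F k \<and> u \<in> W"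
      have "v \<notin> W"
      proof
        assume "v \<in> W"
        then have "degree W F v \<ge> k" using h unfolding min_degree_at_least_def by auto
        moreover have "degree W F v \<le> degree V E v" using deg_sub_le[OF assms(1)] h \<open>v \<in> W\<close> by blast
        ultimately show False using assms(3) by auto
      qed
      have hs: "W \<subseteq> V" "simple_graph W F" "\<And>a b. F a b \<Longrightarrow> E a b"
        using h unfolding subgraph_def by auto
      have "\<And>a b. F a b \<Longrightarrow> a \<in> W \<and> b \<in> W" using hs(2) unfolding simple_graph_def by blast
      then have "\<And>a b. F a b \<Longrightarrow> ?E a b" using hs(3) \<open>v \<notin> W\<close> by metis
      moreover have "W \<subseteq> V - {v}" using hs(1) \<open>v \<notin> W\<close> by blast
      ultimately have "subgraph W F (V - {v}) ?E" using hs(2) unfolding subgraph_def by blast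
      then show False using u h unfolding outside_k_subgraphs_def by blast
    qed
    ultimately show "u \<in> outside_k_subgraphs V E k - {v}" unfolding outside_k_subgraphs_def by blast
  qed
  show "outside_k_subgraphs V E k - {v} \<subseteq> outside_k_subgraphs (V - {v}) ?E k"
  proof
    fix u assume u: "u \<in> outside_k_subgraphs V E k - {v}"
    have "subgraph W F V E" if "subgraph W F (V - {v}) ?E" for W F
      using that unfolding subgraph_def by auto
    then show "u \<in> outside_k_subgraphs (V - {v}) ?E k" using u unfolding outside_k_subgraphs_def by blast
  qed
qed

lemma del_degree:
  assumes "simple_graph V E" "u \<in> V" "u \<noteq> v"
  shows "degree V E u = degree (V - {v}) (\<lambda>a b. E a b \<and> a \<noteq> v \<and> b \<noteq> v) u + (if E u v then 1 else 0)"
proof -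
  have fin: "finite V" using assms(1) unfolding simple_graph_def by auto
  have eq: "{w \<in> V. E u w} = {w \<in> V - {v}. E u w \<and> u \<noteq> v \<and> w \<noteq> v} \<union> (if E u v then {v} else {})"
    using assms unfolding simple_graph_def by auto
  show ?thesis unfolding degree_def eq using fin by (auto simp: card_insert_if)
qed

definition B :: "nat \<Rightarrow> nat \<Rightarrow> nat" where
  "B k m = (k - 1) * m + (\<Sum>j<m. min j (k - 1))"

lemma main:
  assumes "simple_graph V E"
  shows "(\<Sum>u\<in>outside_k_subgraphs V E k. degree V E u) \<le> B k (card (outside_k_subgraphs V E k))"
  using assms
proof (induction "card V" arbitrary: V E rule: less_induct)
  case less
  let ?X = "outside_k_subgraphs V E k"
  have fin: "finite V" using less.prems unfolding simple_graph_def by auto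
  have XV: "?X \<subseteq> V" unfolding outside_k_subgraphs_def by auto
  have finX: "finite ?X" using fin XV finite_subset by blast
  show ?case
  proof (cases "?X = {}")
    case True then show ?thesis by simp
  next
    case False
    then obtain v where v: "v \<in> V" "degree V E v < k" using exists_low[OF less.prems False] by blast
    let ?E = "\<lambda>a b. E a b \<and> a \<noteq> v \<and> b \<noteq> v"
    let ?V = "V - {v}"
    let ?X' = "outside_k_subgraphs ?V ?E k"
    have g': "simple_graph ?V ?E" by (rule del_graph[OF less.prems])
    have X': "?X' = ?X - {v}" by (rule del_X[OF less.prems v])
    have vX: "v \<in> ?X" by (rule low_in_X[OF less.prems v])
    have cardX: "card ?X = Suc (card ?X')" unfolding X' using card_Suc_Diff1[OF finX vX] by simp
    have lt: "card ?V < card V" using fin v(1) by (rule card_Diff1_less)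
    have IH: "(\<Sum>u\<in>?X'. degree ?V ?E u) \<le> B k (card ?X')"
      using less.hyps[OF lt g'] .
    have finX': "finite ?X'" using X' finX by simp
    have s1: "(\<Sum>u\<in>?X. degree V E u) = degree V E v + (\<Sum>u\<in>?X'. degree V E u)"
      using sum.remove[OF finX vX, of "degree V E"] X' by simp
    have s2: "(\<Sum>u\<in>?X'. degree V E u) = (\<Sum>u\<in>?X'. degree ?V ?E u) + (\<Sum>u\<in>?X'. (if E u v then 1 else 0))"
    proof -
      have "(\<Sum>u\<in>?X'. degree V E u) = (\<Sum>u\<in>?X'. degree ?V ?E u + (if E u v then 1 else 0))"
      proof (rule sum.cong)
        fix u assume "u \<in> ?X'"
        then have "u \<in> V" "u \<noteq> v" using X' XV by auto
        then show "degree V E u = degree ?V ?E u + (if E u v then 1 else 0)"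
          by (rule del_degree[OF less.prems])
      qed simp
      then show ?thesis by (simp add: sum.distrib)
    qed
    have s3: "(\<Sum>u\<in>?X'. (if E u v then 1 else 0::nat)) = card {u \<in> ?X'. E u v}"
      using finX' by (simp add: sum.If_cases Int_def)
    have c1: "card {u \<in> ?X'. E u v} \<le> card ?X'"
      using finX' by (simp add: card_mono)
    have c2: "card {u \<in> ?X'. E u v} \<le> degree V E v"
    proof -
      have "{u \<in> ?X'. E u v} \<subseteq> {w \<in> V. E v w}" using X' XV less.prems unfolding simple_graph_def by auto
      then show ?thesis unfolding degree_def using fin by (simp add: card_mono)
    qed
    have "(\<Sum>u\<in>?X. degree V E u) \<le> (k - 1) + B k (card ?X') + min (card ?X') (k - 1)"
      using s1 s2 s3 c1 c2 IH v(2) by linarith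
    also have "\<dots> = B k (card ?X)" unfolding cardX B_def by simp
    finally show ?thesis .
  qed
qed

lemma sum_min:
  fixes k m :: nat
  assumes "k \<le> m" "k \<ge> 1"
  shows "2 * (\<Sum>j<m. min j (k - 1)) + k * (k - 1) = 2 * ((k - 1) * m)"
  using assms(1)
proof (induction rule: dec_induct)
  case base
  have "(\<Sum>j<k. min j (k - 1)) = (\<Sum>j<k. j)" by (rule sum.cong) auto
  moreover have "2 * (\<Sum>j<k. j) = k * (k - 1)"
    by (induction k) (auto simp: algebra_simps)
  ultimately show ?case by (simp add: algebra_simps)
next
  case (step n)
  obtain j where j: "k = Suc j" using assms(2) by (cases k) auto
  have "(\<Sum>i<Suc n. min i (k - 1)) = (\<Sum>i<n. min i (k - 1)) + j"
    using step.hyps j by simp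
  then show ?case using step.IH unfolding j by (simp add: algebra_simps)
qed

theorem lemma2p2:
  fixes V :: "'a set" and E :: "'a \<Rightarrow> 'a \<Rightarrow> bool" and k :: nat
  assumes "simple_graph V E"
    and "k \<ge> 1"
    and "card (outside_k_subgraphs V E k) \<ge> k"
  shows "int (\<Sum>v\<in>outside_k_subgraphs V E k. degree V E v)
           \<le> 2 * (int k - 1) * int (card (outside_k_subgraphs V E k)) - int (k choose 2)"
proof -
  let ?m = "card (outside_k_subgraphs V E k)"
  have M: "(\<Sum>v\<in>outside_k_subgraphs V E k. degree V E v) \<le> B k ?m" using main assms(1) .
  have S: "2 * (\<Sum>j<?m. min j (k - 1)) + k * (k - 1) = 2 * ((k - 1) * ?m)"
    using sum_min assms(2,3) by blast
  have C: "2 * (k choose 2) = k * (k - 1)"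
  proof (induction k)
    case (Suc n) then show ?case by (cases n) (simp_all add: numeral_2_eq_2 algebra_simps)
  qed simp
  have "int (2 * (\<Sum>v\<in>outside_k_subgraphs V E k. degree V E v)) + int (2 * (k choose 2))
        \<le> int (4 * ((k - 1) * ?m))"
    using M S C unfolding B_def by linarith
  then show ?thesis using assms(2) by (simp add: of_nat_diff algebra_simps)
qed

end
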